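(* Let $d\in\mathbb{N}$, $c>0$ and $0<a<1$, and let $\{V, V_{i,n}: i,n\in\mathbb{N}_0\}$ be a family of i.i.d., almost surely nonnegative random variables on a probability space with measure $Q$. Then $E_Q[(\log_+V)^d]<\infty$ if and only if $$\sum_{n\in\mathbb{N}_0}a^n\sum_{i=0}^{\lfloor c\,n^{d-1}\rfloor}V_{i,n}<\infty\quad Q\text{-a.s.}$$
   Context: $\log_+x=\max(\log x,0)$; $\lfloor\cdot\rfloor$ is the integer part; the convention $0^0=1$ is used for $n=0$, $d=1$. *)

theory Defs
  imports "HOL-Probability.Probability"
begin

definition log_plus :: "real \<Rightarrow> real" where
  "log_plus x = (if x \<le> 1 then 0 else ln x)"

end

theory Submission
  imports Defs
begin


lemma pow_step:
  fixes m :: real and d :: nat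
  assumes "m \<ge> 0" "d \<ge> 1"
  shows "(m+1)^d \<le> m^d + real d * (m+1)^(d-1)"
  using assms(2)
proof (induction d rule: dec_induct)
  case base
  then show ?case by simp
next
  case (step d)
  have "(m+1)^Suc d = (m+1) * (m+1)^d" by simp
  also have "\<dots> \<le> (m+1) * (m^d + real d * (m+1)^(d-1))"
    using step assms by (intro mult_left_mono) auto
  also have "\<dots> = m^Suc d + m^d + real d * (m+1)^d"
    using step by (cases d) (auto simp: algebra_simps)
  also have "\<dots> \<le> m^Suc d + real (Suc d) * (m+1)^(Suc d - 1)"
    using assms by (auto simp: algebra_simps intro!: power_mono)
  finally show ?case .
qed

lemma powsum_lower:
  fixes m d :: nat
  assumes "d \<ge> 1"
  shows "real m ^ d \<le> real d * (\<Sum>n\<le>m. real n^(d-1))"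
proof (induction m)
  case 0
  then show ?case using assms by (simp add: power_0_left)
next
  case (Suc m)
  have "real (Suc m) ^ d = (real m + 1)^d" by (simp add: add.commute)
  also have "\<dots> \<le> real m ^ d + real d * (real m + 1)^(d-1)"
    using pow_step[of "real m" d] assms by simp
  also have "\<dots> \<le> real d * (\<Sum>n\<le>m. real n^(d-1)) + real d * real (Suc m)^(d-1)"
    using Suc by (simp add: add.commute)
  finally show ?case by (simp add: algebra_simps)
qed

lemma z_bound:
  fixes z :: real and d :: nat
  assumes "z \<ge> 0" "d \<ge> 1"
  shows "z^d \<le> 2^d * (real d * (\<Sum>n\<le>nat \<lfloor>z\<rfloor>. real n^(d-1)) + 1)"
proof -
  define m where "m = nat \<lfloor>z\<rfloor>"
  have zm: "z \<le> real m + 1" using assms unfolding m_def by linarith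
  have "z^d \<le> (real m + 1)^d" using zm assms by (intro power_mono) auto
  also have "\<dots> \<le> 2^d * (real m ^ d + 1)"
  proof (cases "m = 0")
    case True then show ?thesis by (simp add: power_0_left)
  next
    case False
    then have "real m + 1 \<le> 2 * real m" by simp
    then have "(real m + 1)^d \<le> (2 * real m)^d" by (intro power_mono) auto
    moreover have "(2::real)^d * real m ^ d \<le> 2^d * (real m ^ d + 1)" by simp
    ultimately show ?thesis unfolding power_mult_distrib by linarith
  qed
  also have "\<dots> \<le> 2^d * (real d * (\<Sum>n\<le>m. real n^(d-1)) + 1)"
    using powsum_lower[OF assms(2), of m] by simp
  finally show ?thesis unfolding m_def .
qed

lemma z_upper:
  fixes z :: real and d :: nat
  assumes "z \<ge> 0" "d \<ge> 1"
  shows "(\<Sum>n<nat \<lceil>z\<rceil>. real n^(d-1)) \<le> 2^d * (z^d + 1)"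
proof -
  have "(\<Sum>n<nat \<lceil>z\<rceil>. real n^(d-1)) \<le> (\<Sum>n<nat \<lceil>z\<rceil>. z^(d-1))"
  proof (intro sum_mono power_mono)
    fix n assume "n \<in> {..<nat \<lceil>z\<rceil>}"
    then have "int n < \<lceil>z\<rceil>" by simp
    then show "real n \<le> z" by (simp add: less_ceiling_iff)
  qed auto
  also have "\<dots> = real (nat \<lceil>z\<rceil>) * z^(d-1)" by simp
  also have "\<dots> \<le> (z+1) * (z+1)^(d-1)"
    using assms by (intro mult_mono power_mono) auto
  also have "\<dots> = (z+1)^d" using assms by (cases d) auto
  also have "\<dots> \<le> 2^d * (z^d + 1)"
  proof (cases "z \<le> 1")
    case True
    then have "(z+1)^d \<le> 2^d" using assms by (intro power_mono) auto
    moreover have "(2::real)^d \<le> 2^d * (z^d + 1)" using assms by simp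
    ultimately show ?thesis by linarith
  next
    case False
    then have "(z+1)^d \<le> (2*z)^d" using assms by (intro power_mono) auto
    moreover have "(2::real)^d * z^d \<le> 2^d * (z^d + 1)" by simp
    ultimately show ?thesis unfolding power_mult_distrib by linarith
  qed
  finally show ?thesis .
qed

lemma poly_geom_summable:
  fixes r :: real and k :: nat
  assumes "0 < r" "r < 1"
  shows "summable (\<lambda>n. real n ^ k * r ^ n)"
proof -
  define \<delta> where "\<delta> = - ln r / 2"
  have dpos: "\<delta> > 0" using assms unfolding \<delta>_def by simp
  have r_eq: "r = exp (-2*\<delta>)" using assms unfolding \<delta>_def by simp
  have bnd: "real n ^ k \<le> (real k / \<delta>)^k * exp (\<delta> * real n)" for n
  proof (cases "k = 0")
    case True then show ?thesis using dpos by simp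
  next
    case False
    have "\<delta> * real n / real k \<le> exp (\<delta> * real n / real k)"
      using exp_ge_add_one_self[of "\<delta> * real n / real k"] by linarith
    then have "(\<delta> * real n / real k)^k \<le> exp (\<delta> * real n / real k)^k"
      using dpos by (intro power_mono) auto
    also have "\<dots> = exp (\<delta> * real n)"
      using False by (simp add: exp_of_nat_mult[symmetric])
    finally have "(\<delta> * real n / real k)^k \<le> exp (\<delta> * real n)" .
    then have "(real k / \<delta>)^k * (\<delta> * real n / real k)^k \<le> (real k / \<delta>)^k * exp (\<delta> * real n)"
      using dpos by (intro mult_left_mono) auto
    moreover have "(real k / \<delta>)^k * (\<delta> * real n / real k)^k = real n ^ k"
      using False dpos by (simp add: power_mult_distrib[symmetric])
    ultimately show ?thesis by simp
  qed
  have "summable (\<lambda>n. (real k / \<delta>)^k * exp (-\<delta>) ^ n)"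
    using dpos by (intro summable_mult summable_geometric) auto
  moreover have "norm (real n ^ k * r ^ n) \<le> (real k / \<delta>)^k * exp (-\<delta>) ^ n" for n
  proof -
    have "norm (real n ^ k * r ^ n) = real n ^ k * r ^ n" using assms by simp
    also have "\<dots> \<le> (real k / \<delta>)^k * exp (\<delta> * real n) * r^n"
      using bnd assms by (intro mult_right_mono) auto
    also have "\<dots> = (real k / \<delta>)^k * exp (-\<delta>) ^ n"
      unfolding r_eq by (simp add: exp_of_nat_mult[symmetric] mult.assoc exp_add[symmetric] algebra_simps)
    finally show ?thesis .
  qed
  ultimately show ?thesis by (rule summable_comparison_test')
qed



lemma tail_lt:
  assumes "prob_space M" and [measurable]: "Z \<in> borel_measurable M" and "\<And>x. x \<in> space M \<Longrightarrow> Z x \<ge> 0"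
  shows "(\<Sum>n. ennreal (real n ^ k * measure M {x\<in>space M. real n < Z x}))
     = (\<integral>\<^sup>+x. ennreal (\<Sum>n<nat \<lceil>Z x\<rceil>. real n ^ k) \<partial>M)"
proof -
  interpret prob_space M by fact
  have "ennreal (real n ^ k * measure M {x\<in>space M. real n < Z x})
      = (\<integral>\<^sup>+x. ennreal (real n ^ k) * indicator {x\<in>space M. real n < Z x} x \<partial>M)" for n
    by (subst nn_integral_cmult_indicator) (auto simp: emeasure_eq_measure ennreal_mult)
  then have "(\<Sum>n. ennreal (real n ^ k * measure M {x\<in>space M. real n < Z x}))
     = (\<Sum>n. \<integral>\<^sup>+x. ennreal (real n ^ k) * indicator {x\<in>space M. real n < Z x} x \<partial>M)" by simp
  also have "\<dots> = (\<integral>\<^sup>+x. (\<Sum>n. ennreal (real n ^ k) * indicator {x\<in>space M. real n < Z x} x) \<partial>M)"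
    by (rule nn_integral_suminf[symmetric]) measurable
  also have "\<dots> = (\<integral>\<^sup>+x. ennreal (\<Sum>n<nat \<lceil>Z x\<rceil>. real n ^ k) \<partial>M)"
  proof (rule nn_integral_cong)
    fix x assume x: "x \<in> space M"
    have iff: "real n < Z x \<longleftrightarrow> n < nat \<lceil>Z x\<rceil>" for n
      using assms(3)[OF x] by linarith
    have "(\<Sum>n. ennreal (real n ^ k) * indicator {x\<in>space M. real n < Z x} x)
        = (\<Sum>n<nat \<lceil>Z x\<rceil>. ennreal (real n ^ k) * indicator {x\<in>space M. real n < Z x} x)"
      by (rule suminf_finite) (auto simp: indicator_def x iff)
    also have "\<dots> = (\<Sum>n<nat \<lceil>Z x\<rceil>. ennreal (real n ^ k))"
      by (rule sum.cong) (auto simp: indicator_def x iff)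
    also have "\<dots> = ennreal (\<Sum>n<nat \<lceil>Z x\<rceil>. real n ^ k)" by simp
    finally show "(\<Sum>n. ennreal (real n ^ k) * indicator {x\<in>space M. real n < Z x} x)
        = ennreal (\<Sum>n<nat \<lceil>Z x\<rceil>. real n ^ k)" .
  qed
  finally show ?thesis .
qed

lemma tail_le:
  assumes "prob_space M" and [measurable]: "Z \<in> borel_measurable M" and "\<And>x. x \<in> space M \<Longrightarrow> Z x \<ge> 0"
  shows "(\<Sum>n. ennreal (real n ^ k * measure M {x\<in>space M. real n \<le> Z x}))
     = (\<integral>\<^sup>+x. ennreal (\<Sum>n\<le>nat \<lfloor>Z x\<rfloor>. real n ^ k) \<partial>M)"
proof -
  interpret prob_space M by fact
  have "ennreal (real n ^ k * measure M {x\<in>space M. real n \<le> Z x})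
      = (\<integral>\<^sup>+x. ennreal (real n ^ k) * indicator {x\<in>space M. real n \<le> Z x} x \<partial>M)" for n
    by (subst nn_integral_cmult_indicator) (auto simp: emeasure_eq_measure ennreal_mult)
  then have "(\<Sum>n. ennreal (real n ^ k * measure M {x\<in>space M. real n \<le> Z x}))
     = (\<Sum>n. \<integral>\<^sup>+x. ennreal (real n ^ k) * indicator {x\<in>space M. real n \<le> Z x} x \<partial>M)" by simp
  also have "\<dots> = (\<integral>\<^sup>+x. (\<Sum>n. ennreal (real n ^ k) * indicator {x\<in>space M. real n \<le> Z x} x) \<partial>M)"
    by (rule nn_integral_suminf[symmetric]) measurable
  also have "\<dots> = (\<integral>\<^sup>+x. ennreal (\<Sum>n\<le>nat \<lfloor>Z x\<rfloor>. real n ^ k) \<partial>M)"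
  proof (rule nn_integral_cong)
    fix x assume x: "x \<in> space M"
    have iff: "real n \<le> Z x \<longleftrightarrow> n \<le> nat \<lfloor>Z x\<rfloor>" for n
      using assms(3)[OF x] by linarith
    have "(\<Sum>n. ennreal (real n ^ k) * indicator {x\<in>space M. real n \<le> Z x} x)
        = (\<Sum>n\<le>nat \<lfloor>Z x\<rfloor>. ennreal (real n ^ k) * indicator {x\<in>space M. real n \<le> Z x} x)"
      by (rule suminf_finite) (auto simp: indicator_def x iff)
    also have "\<dots> = (\<Sum>n\<le>nat \<lfloor>Z x\<rfloor>. ennreal (real n ^ k))"
      by (rule sum.cong) (auto simp: indicator_def x iff)
    also have "\<dots> = ennreal (\<Sum>n\<le>nat \<lfloor>Z x\<rfloor>. real n ^ k)" by simp
    finally show "(\<Sum>n. ennreal (real n ^ k) * indicator {x\<in>space M. real n \<le> Z x} x)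
        = ennreal (\<Sum>n\<le>nat \<lfloor>Z x\<rfloor>. real n ^ k)" .
  qed
  finally show ?thesis .
qed



lemma conv_lemma:
  assumes "prob_space M" and [measurable]: "Y \<in> borel_measurable M"
    and Y0: "\<And>x. x \<in> space M \<Longrightarrow> Y x \<ge> 0" and e: "\<epsilon> > 0" and d: "d \<ge> 1"
    and fin: "(\<integral>\<^sup>+x. ennreal (Y x ^ d) \<partial>M) < \<infinity>"
  shows "summable (\<lambda>n. real n ^ (d-1) * measure M {x\<in>space M. real n * \<epsilon> < Y x})"
proof -
  interpret prob_space M by fact
  define Z where "Z x = Y x / \<epsilon>" for x
  have [measurable]: "Z \<in> borel_measurable M" unfolding Z_def by measurable
  have Z0: "\<And>x. x \<in> space M \<Longrightarrow> Z x \<ge> 0" using Y0 e unfolding Z_def by simp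
  have sets: "{x\<in>space M. real n * \<epsilon> < Y x} = {x\<in>space M. real n < Z x}" for n
    using e unfolding Z_def by (auto simp: pos_less_divide_eq)
  have "(\<Sum>n. ennreal (real n ^ (d-1) * measure M {x\<in>space M. real n * \<epsilon> < Y x}))
      = (\<integral>\<^sup>+x. ennreal (\<Sum>n<nat \<lceil>Z x\<rceil>. real n ^ (d-1)) \<partial>M)"
    unfolding sets by (rule tail_lt[OF assms(1)]) (use Z0 in auto)
  also have "\<dots> \<le> (\<integral>\<^sup>+x. ennreal (2^d / \<epsilon>^d) * ennreal (Y x ^ d) + ennreal (2^d) \<partial>M)"
  proof (rule nn_integral_mono)
    fix x assume x: "x \<in> space M"
    have "(\<Sum>n<nat \<lceil>Z x\<rceil>. real n ^ (d-1)) \<le> 2^d * (Z x ^ d + 1)"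
      by (rule z_upper[OF Z0[OF x] d])
    also have "\<dots> = 2^d / \<epsilon>^d * Y x ^ d + 2^d"
      unfolding Z_def by (simp add: power_divide algebra_simps)
    finally show "ennreal (\<Sum>n<nat \<lceil>Z x\<rceil>. real n ^ (d-1)) \<le> ennreal (2^d / \<epsilon>^d) * ennreal (Y x ^ d) + ennreal (2^d)"
      using e Y0[OF x] by (simp add: ennreal_mult[symmetric] ennreal_plus[symmetric] del: ennreal_plus)
  qed
  also have "\<dots> = ennreal (2^d / \<epsilon>^d) * (\<integral>\<^sup>+x. ennreal (Y x ^ d) \<partial>M) + ennreal (2^d)"
    by (subst nn_integral_add) (auto simp: nn_integral_cmult emeasure_space_1)
  also have "\<dots> < \<infinity>" using fin by (simp add: ennreal_mult_less_top less_top)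
  finally have "(\<Sum>n. ennreal (real n ^ (d-1) * measure M {x\<in>space M. real n * \<epsilon> < Y x})) \<noteq> \<top>"
    by simp
  then show ?thesis by (rule summable_suminf_not_top[rotated]) simp
qed

lemma div_lemma:
  assumes "prob_space M" and [measurable]: "Y \<in> borel_measurable M"
    and Y0: "\<And>x. x \<in> space M \<Longrightarrow> Y x \<ge> 0" and L: "L > 0" and d: "d \<ge> 1"
    and inf: "(\<integral>\<^sup>+x. ennreal (Y x ^ d) \<partial>M) = \<infinity>"
  shows "\<not> summable (\<lambda>n. real n ^ (d-1) * measure M {x\<in>space M. real n * L \<le> Y x})"
proof
  assume sum: "summable (\<lambda>n. real n ^ (d-1) * measure M {x\<in>space M. real n * L \<le> Y x})"
  interpret prob_space M by fact
  define Z where "Z x = Y x / L" for x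
  have [measurable]: "Z \<in> borel_measurable M" unfolding Z_def by measurable
  have Z0: "\<And>x. x \<in> space M \<Longrightarrow> Z x \<ge> 0" using Y0 L unfolding Z_def by simp
  have sets: "{x\<in>space M. real n * L \<le> Y x} = {x\<in>space M. real n \<le> Z x}" for n
    using L unfolding Z_def by (auto simp: pos_le_divide_eq)
  define S where "S x = (\<Sum>n\<le>nat \<lfloor>Z x\<rfloor>. real n ^ (d-1))" for x
  have ne: "(\<Sum>n. ennreal (real n ^ (d-1) * measure M {x\<in>space M. real n * L \<le> Y x})) \<noteq> \<top>"
    by (rule ennreal_suminf_neq_top[OF sum]) simp
  have eq: "(\<Sum>n. ennreal (real n ^ (d-1) * measure M {x\<in>space M. real n * L \<le> Y x}))
      = (\<integral>\<^sup>+x. ennreal (S x) \<partial>M)"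
    unfolding sets S_def by (rule tail_le[OF assms(1)]) (use Z0 in auto)
  have "(\<integral>\<^sup>+x. ennreal (S x) \<partial>M) \<noteq> \<top>" using ne unfolding eq .
  then have Sfin: "(\<integral>\<^sup>+x. ennreal (S x) \<partial>M) < \<infinity>" by (simp add: less_top)
  have "(\<integral>\<^sup>+x. ennreal (Y x ^ d) \<partial>M) \<le> (\<integral>\<^sup>+x. ennreal (L^d * 2^d * real d) * ennreal (S x) + ennreal (L^d * 2^d) \<partial>M)"
  proof (rule nn_integral_mono)
    fix x assume x: "x \<in> space M"
    have "Y x ^ d = L^d * Z x ^ d" using L unfolding Z_def by (simp add: power_divide)
    also have "\<dots> \<le> L^d * (2^d * (real d * S x + 1))"
      unfolding S_def using z_bound[OF Z0[OF x] d] L by (intro mult_left_mono) auto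
    also have "\<dots> = L^d * 2^d * real d * S x + L^d * 2^d" by (simp add: algebra_simps)
    finally have "Y x ^ d \<le> L^d * 2^d * real d * S x + L^d * 2^d" .
    moreover have "S x \<ge> 0" unfolding S_def by (intro sum_nonneg) auto
    ultimately show "ennreal (Y x ^ d) \<le> ennreal (L^d * 2^d * real d) * ennreal (S x) + ennreal (L^d * 2^d)"
      using L by (simp add: ennreal_mult[symmetric] ennreal_plus[symmetric] del: ennreal_plus)
  qed
  also have "\<dots> = ennreal (L^d * 2^d * real d) * (\<integral>\<^sup>+x. ennreal (S x) \<partial>M) + ennreal (L^d * 2^d)"
    unfolding S_def by (subst nn_integral_add) (auto simp: nn_integral_cmult emeasure_space_1)
  also have "\<dots> < \<infinity>" using Sfin by (simp add: ennreal_mult_less_top less_top)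
  finally show False using inf by simp
qed



lemma log_plus_nonneg: "log_plus x \<ge> 0"
  unfolding log_plus_def by auto

lemma log_plus_meas[measurable]: "log_plus \<in> borel_measurable borel"
  unfolding log_plus_def by measurable

lemma dir1:
  fixes Q :: "'a measure" and V :: "'a \<Rightarrow> real" and W :: "nat \<Rightarrow> nat \<Rightarrow> 'a \<Rightarrow> real"
    and d :: nat and c a :: real
  assumes "prob_space Q"
    and d: "d \<ge> 1" and c: "c > 0" and a0: "0 < a" and a1: "a < 1"
    and dist: "\<And>i n. distr Q borel (W i n) = distr Q borel V"
    and [measurable]: "V \<in> borel_measurable Q" and [measurable]: "\<And>i n. W i n \<in> borel_measurable Q"
    and Wnn: "\<And>i n. AE x in Q. W i n x \<ge> 0"
    and fin: "(\<integral>\<^sup>+ x. ennreal ((log_plus (V x)) ^ d) \<partial>Q) < \<infinity>"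
  shows "AE x in Q. summable (\<lambda>n. a ^ n *
             (\<Sum>i = 0..nat \<lfloor>c * real n ^ (d - 1)\<rfloor>. W i n x))"
proof -
  interpret P: prob_space Q by fact
  define k where "k n = nat \<lfloor>c * real n ^ (d - 1)\<rfloor>" for n
  define Y where "Y x = log_plus (V x)" for x
  have [measurable]: "Y \<in> borel_measurable Q" unfolding Y_def by measurable
  have iddist: "P.prob (W i n -` A \<inter> space Q) = P.prob (V -` A \<inter> space Q)" if "A \<in> sets borel" for i n A
    using measure_distr[of "W i n" Q borel A] measure_distr[of V Q borel A] dist[of i n] that by simp
  have kbound: "real (k n) + 1 \<le> (c+1) * real n ^ (d-1)" if "n \<ge> 1" for n
  proof -
    have "1 \<le> real n ^ (d-1)" using that by simp
    moreover have "real (k n) \<le> c * real n ^ (d-1)" unfolding k_def using c by simp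
    ultimately show ?thesis by (simp add: algebra_simps)
  qed
  define r where "r = sqrt a"
  have r0: "0 < r" and r1: "r < 1" using a0 a1 unfolding r_def by auto
  have ar: "a = r * r" unfolding r_def using a0 by simp
  define \<epsilon> where "\<epsilon> = - ln r"
  have e0: "\<epsilon> > 0" using r0 r1 unfolding \<epsilon>_def by simp
  have ee: "exp \<epsilon> = 1/r" using r0 unfolding \<epsilon>_def by (simp add: exp_minus inverse_eq_divide)
  have expe: "exp (real n * \<epsilon>) = (1/r)^n" for n
    using exp_of_nat_mult[of n \<epsilon>] ee by simp
  define q where "q n = P.prob {x\<in>space Q. real n * \<epsilon> < Y x}" for n
  have fin': "(\<integral>\<^sup>+ x. ennreal ((Y x) ^ d) \<partial>Q) < \<infinity>" using fin unfolding Y_def .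
  have summ: "summable (\<lambda>n. real n ^ (d-1) * q n)"
    unfolding q_def by (rule conv_lemma[OF assms(1) _ _ e0 d fin']) (auto simp: Y_def log_plus_nonneg)
  define C where "C n = (\<Union>i\<in>{..k n}. {x\<in>space Q. real n * \<epsilon> < log_plus (W i n x)})" for n
  have [measurable]: "C n \<in> sets Q" for n unfolding C_def by measurable
  have PC: "P.prob (C n) \<le> (real (k n) + 1) * q n" for n
  proof -
    have "P.prob (C n) \<le> (\<Sum>i\<in>{..k n}. P.prob {x\<in>space Q. real n * \<epsilon> < log_plus (W i n x)})"
      unfolding C_def by (rule measure_UNION_le) auto
    also have "\<dots> = (\<Sum>i\<in>{..k n}. q n)"
    proof (rule sum.cong)
      fix i
      have "{y. real n * \<epsilon> < log_plus y} \<in> sets borel" by measurable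
      from iddist[OF this, of i n]
      show "P.prob {x\<in>space Q. real n * \<epsilon> < log_plus (W i n x)} = q n"
        unfolding q_def Y_def by (simp add: vimage_def Int_def conj_commute)
    qed simp
    finally show ?thesis by (simp add: add.commute)
  qed
  have summC: "summable (\<lambda>n. P.prob (C n))"
  proof (rule summable_comparison_test_ev)
    show "summable (\<lambda>n. (c+1) * (real n ^ (d-1) * q n))" by (intro summable_mult summ)
    show "\<forall>\<^sub>F n in sequentially. norm (P.prob (C n)) \<le> (c+1) * (real n ^ (d-1) * q n)"
      using eventually_ge_at_top[of "1::nat"]
    proof eventually_elim
      case (elim n)
      have q0: "q n \<ge> 0" unfolding q_def by simp
      have "P.prob (C n) \<le> (real (k n) + 1) * q n" by (rule PC)
      also have "\<dots> \<le> (c+1) * real n ^ (d-1) * q n"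
        using kbound[OF elim] q0 by (intro mult_right_mono) auto
      finally show ?case by simp
    qed
  qed
  have BC: "AE x in Q. eventually (\<lambda>n. x \<in> space Q - C n) sequentially"
    by (rule borel_cantelli_AE1) (auto simp: summC P.emeasure_eq_measure)
  have Wall: "AE x in Q. \<forall>i n. W i n x \<ge> 0"
    using Wnn by (simp add: AE_all_countable)
  have "AE x in Q. summable (\<lambda>n. a ^ n * (\<Sum>i = 0..k n. W i n x))"
    using BC Wall
  proof eventually_elim
    case (elim x)
    show ?case
    proof (rule summable_comparison_test_ev)
      show "summable (\<lambda>n. (c+1) * (real n ^ (d-1) * r ^ n))"
        by (intro summable_mult poly_geom_summable r0 r1)
      show "\<forall>\<^sub>F n in sequentially. norm (a ^ n * (\<Sum>i = 0..k n. W i n x)) \<le> (c+1) * (real n ^ (d-1) * r ^ n)"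
        using elim(1) eventually_ge_at_top[of "1::nat"]
      proof eventually_elim
        case (elim n)
        have Wle: "W i n x \<le> (1/r)^n" if "i \<le> k n" for i
        proof -
          have "\<not> real n * \<epsilon> < log_plus (W i n x)" using elim(1) that unfolding C_def by auto
          then have lp: "log_plus (W i n x) \<le> real n * \<epsilon>" by simp
          show ?thesis
          proof (cases "W i n x \<le> 1")
            case True
            have "1 \<le> (1/r)^n" using r0 r1 by (simp add: one_le_power)
            then show ?thesis using True by linarith
          next
            case False
            then have "ln (W i n x) \<le> real n * \<epsilon>" using lp unfolding log_plus_def by simp
            then have "exp (ln (W i n x)) \<le> exp (real n * \<epsilon>)" by simp
            then have "W i n x \<le> exp (real n * \<epsilon>)" using False by simp
            then show ?thesis using expe by simp
          qed
        qed
        have sum0: "(\<Sum>i = 0..k n. W i n x) \<ge> 0" using \<open>\<forall>i n. W i n x \<ge> 0\<close> by (intro sum_nonneg) auto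
        have "norm (a ^ n * (\<Sum>i = 0..k n. W i n x)) = a ^ n * (\<Sum>i = 0..k n. W i n x)"
          using sum0 a0 by simp
        also have "\<dots> \<le> a ^ n * (\<Sum>i = 0..k n. (1/r)^n)"
          using Wle a0 by (intro mult_left_mono sum_mono) auto
        also have "\<dots> = (real (k n) + 1) * (a^n * (1/r)^n)" by simp
        also have "a^n * (1/r)^n = r^n" unfolding ar using r0
          by (simp add: power_mult_distrib[symmetric] power_divide[symmetric])
        also have "(real (k n) + 1) * r^n \<le> (c+1) * real n ^ (d-1) * r^n"
          using kbound[OF elim(2)] r0 by (intro mult_right_mono) auto
        finally show ?case by (simp add: mult.assoc)
      qed
    qed
  qed
  then show ?thesis unfolding k_def .
qed



lemma dir2:
  fixes Q :: "'a measure" and V :: "'a \<Rightarrow> real" and W :: "nat \<Rightarrow> nat \<Rightarrow> 'a \<Rightarrow> real"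
    and d :: nat and c a :: real
  assumes "prob_space Q"
    and d: "d \<ge> 1" and c: "c > 0" and a0: "0 < a" and a1: "a < 1"
    and indep: "prob_space.indep_vars Q (\<lambda>_. borel)
           (\<lambda>k. case k of None \<Rightarrow> V | Some (i, n) \<Rightarrow> W i n) UNIV"
    and dist: "\<And>i n. distr Q borel (W i n) = distr Q borel V"
    and [measurable]: "V \<in> borel_measurable Q" and [measurable]: "\<And>i n. W i n \<in> borel_measurable Q"
    and Wnn: "\<And>i n. AE x in Q. W i n x \<ge> 0"
    and ae: "AE x in Q. summable (\<lambda>n. a ^ n *
             (\<Sum>i = 0..nat \<lfloor>c * real n ^ (d - 1)\<rfloor>. W i n x))"
  shows "(\<integral>\<^sup>+ x. ennreal ((log_plus (V x)) ^ d) \<partial>Q) < \<infinity>"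
proof (rule ccontr)
  assume "\<not> ?thesis"
  then have inf: "(\<integral>\<^sup>+ x. ennreal ((log_plus (V x)) ^ d) \<partial>Q) = \<infinity>" by (simp add: less_top[symmetric])
  interpret P: prob_space Q by fact
  define k where "k n = nat \<lfloor>c * real n ^ (d - 1)\<rfloor>" for n
  define Y where "Y x = log_plus (V x)" for x
  have [measurable]: "Y \<in> borel_measurable Q" unfolding Y_def by measurable
  have iddist: "P.prob (W i n -` A \<inter> space Q) = P.prob (V -` A \<inter> space Q)" if "A \<in> sets borel" for i n A
    using measure_distr[of "W i n" Q borel A] measure_distr[of V Q borel A] dist[of i n] that by simp
  have klow: "c * real n ^ (d-1) \<le> real (k n) + 1" for n
    unfolding k_def by linarith
  define L where "L = - ln a"
  have L0: "L > 0" using a0 a1 unfolding L_def by simp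
  define t where "t n = exp (real n * L)" for n
  have at: "a ^ n * t n = 1" for n
  proof -
    have "exp L = 1/a" using a0 unfolding L_def by (simp add: exp_minus inverse_eq_divide)
    then have "t n = (1/a)^n" unfolding t_def using exp_of_nat_mult[of n L] by simp
    then show ?thesis using a0 by (simp add: power_divide)
  qed
  define p where "p n = P.prob {x\<in>space Q. t n \<le> V x}" for n
  have p01: "0 \<le> p n" "p n \<le> 1" for n unfolding p_def by auto
  have ndiv: "\<not> summable (\<lambda>n. real n ^ (d-1) * P.prob {x\<in>space Q. real n * L \<le> Y x})"
    by (rule div_lemma[OF assms(1) _ _ L0 d inf[folded Y_def]]) (auto simp: Y_def log_plus_nonneg)
  have setsEq: "{x\<in>space Q. real n * L \<le> Y x} = {x\<in>space Q. t n \<le> V x}" if "n \<ge> 1" for n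
  proof -
    have nL: "real n * L > 0" using that L0 by simp
    have "real n * L \<le> Y x \<longleftrightarrow> t n \<le> V x" for x
    proof (cases "V x \<le> 1")
      case True
      have "t n > 1" unfolding t_def using nL by simp
      then show ?thesis using True nL by (simp add: Y_def log_plus_def)
    next
      case False
      then have "Y x = ln (V x)" by (simp add: Y_def log_plus_def)
      moreover have "real n * L \<le> ln (V x) \<longleftrightarrow> exp (real n * L) \<le> exp (ln (V x))"
        by simp
      ultimately show ?thesis using False by (simp add: t_def)
    qed
    then show ?thesis by auto
  qed
  have ndiv2: "\<not> summable (\<lambda>n. (real (k n) + 1) * p n)"
  proof
    assume s: "summable (\<lambda>n. (real (k n) + 1) * p n)"
    have "summable (\<lambda>n. real n ^ (d-1) * P.prob {x\<in>space Q. real n * L \<le> Y x})"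
    proof (rule summable_comparison_test_ev)
      show "summable (\<lambda>n. (1/c) * ((real (k n) + 1) * p n))" by (intro summable_mult s)
      show "\<forall>\<^sub>F n in sequentially. norm (real n ^ (d-1) * P.prob {x\<in>space Q. real n * L \<le> Y x}) \<le> (1/c) * ((real (k n) + 1) * p n)"
        using eventually_ge_at_top[of "1::nat"]
      proof eventually_elim
        case (elim n)
        have "norm (real n ^ (d-1) * P.prob {x\<in>space Q. real n * L \<le> Y x}) = real n ^ (d-1) * p n"
          unfolding setsEq[OF elim] p_def by simp
        also have "\<dots> \<le> ((real (k n) + 1) / c) * p n"
          using klow[of n] c p01[of n] by (intro mult_right_mono) (auto simp: field_simps)
        finally show ?case by simp
      qed
    qed
    then show False using ndiv by simp
  qed
  have unb: "\<exists>M. T < (\<Sum>n\<le>M. (real (k n) + 1) * p n)" for T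
  proof (rule ccontr)
    assume "\<not> ?thesis"
    then have "(\<Sum>n\<le>M. (real (k n) + 1) * p n) \<le> T" for M by (simp add: not_less)
    then have "summable (\<lambda>n. (real (k n) + 1) * p n)"
      by (intro bounded_imp_summable) (use p01 in auto)
    then show False using ndiv2 by simp
  qed
  define E where "E N = {x\<in>space Q. \<forall>n. N \<le> n \<longrightarrow> (\<forall>i. i \<le> k n \<longrightarrow> W i n x < t n)}" for N
  have Emeas[measurable]: "E N \<in> sets Q" for N unfolding E_def by measurable
  have Enull: "E N \<in> null_sets Q" for N
  proof -
    have bnd: "P.prob (E N) \<le> exp (- (\<Sum>n\<in>{N..M}. (real (k n) + 1) * p n))" if "N \<le> M" for M
    proof -
      define F where "F = (\<lambda>(n,i). (i,n)) ` (SIGMA n:{N..M}. {..k n})"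
      have finF: "finite F" unfolding F_def by auto
      have "(N, 0) \<in> (SIGMA n:{N..M}. {..k n})" using that by auto
      then have neF: "F \<noteq> {}" unfolding F_def by blast
      define X where "X = (\<lambda>j. case j of None \<Rightarrow> V | Some (i, n) \<Rightarrow> W i n)"
      define Pr where "Pr = (\<lambda>(j::(nat\<times>nat) option) (y::real). case j of None \<Rightarrow> True | Some (i,n) \<Rightarrow> y < t n)"
      define A where "A j = {x\<in>space Q. Pr j (X j x)}" for j
      have iv: "P.indep_vars (\<lambda>_. borel) X UNIV" using indep unfolding X_def .
      have ind: "P.indep_events A UNIV"
        unfolding A_def
        by (rule P.indep_eventsI_indep_vars[of "\<lambda>_. borel" X UNIV Pr, OF iv])
           (auto simp: Pr_def split: option.split)
      have Asets: "A j \<in> sets Q" for j using ind unfolding P.indep_events_def by auto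
      have prodeq: "P.prob (\<Inter>j\<in>Some ` F. A j) = (\<Prod>j\<in>Some ` F. P.prob (A j))"
        using ind finF neF unfolding P.indep_events_def by (metis finite_imageI image_is_empty top_greatest)
      have sub: "E N \<subseteq> (\<Inter>j\<in>Some ` F. A j)"
        unfolding E_def A_def F_def Pr_def X_def by auto
      have "P.prob (E N) \<le> P.prob (\<Inter>j\<in>Some ` F. A j)"
        using sub Asets neF finF by (intro P.finite_measure_mono) auto
      also have "\<dots> = (\<Prod>j\<in>F. P.prob (A (Some j)))"
        unfolding prodeq by (subst prod.reindex) auto
      also have "\<dots> = (\<Prod>j\<in>F. 1 - p (snd j))"
      proof (rule prod.cong)
        fix j assume "j \<in> F"
        obtain i n where j: "j = (i,n)" by (cases j)
        have "A (Some j) = space Q - {x\<in>space Q. t n \<le> W i n x}"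
          unfolding A_def j Pr_def X_def by auto
        then have "P.prob (A (Some j)) = 1 - P.prob {x\<in>space Q. t n \<le> W i n x}"
          by (simp add: P.prob_compl)
        also have "P.prob {x\<in>space Q. t n \<le> W i n x} = p n"
        proof -
          have "{y. t n \<le> y} \<in> sets borel" by measurable
          from iddist[OF this, of i n]
          show ?thesis unfolding p_def by (simp add: vimage_def Int_def conj_commute)
        qed
        finally show "P.prob (A (Some j)) = 1 - p (snd j)" using j by simp
      qed simp
      also have "\<dots> \<le> (\<Prod>j\<in>F. exp (- p (snd j)))"
      proof (rule prod_mono)
        fix j
        have "1 + (- p (snd j)) \<le> exp (- p (snd j))" by (rule exp_ge_add_one_self)
        then show "0 \<le> 1 - p (snd j) \<and> 1 - p (snd j) \<le> exp (- p (snd j))"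
          using p01[of "snd j"] by simp
      qed
      also have "\<dots> = exp (- (\<Sum>j\<in>F. p (snd j)))"
        using exp_sum[OF finF, of "\<lambda>j. - p (snd j)"] by (simp add: sum_negf)
      also have "(\<Sum>j\<in>F. p (snd j)) = (\<Sum>n\<in>{N..M}. (real (k n) + 1) * p n)"
      proof -
        have inj: "inj_on (\<lambda>(n,i). (i::nat,n::nat)) (SIGMA n:{N..M}. {..k n})"
          by (auto simp: inj_on_def)
        have "(\<Sum>j\<in>F. p (snd j)) = (\<Sum>j\<in>(SIGMA n:{N..M}. {..k n}). p (fst j))"
          unfolding F_def by (subst sum.reindex[OF inj]) (auto intro!: sum.cong)
        also have "\<dots> = (\<Sum>n\<in>{N..M}. \<Sum>i\<le>k n. p n)"
          using sum.Sigma[of "{N..M}" "\<lambda>n. {..k n}" "\<lambda>n i. p n"] by (simp add: case_prod_beta)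
        also have "\<dots> = (\<Sum>n\<in>{N..M}. (real (k n) + 1) * p n)" by (simp add: add.commute)
        finally show ?thesis .
      qed
      finally show ?thesis .
    qed
    have "P.prob (E N) \<le> 0"
    proof (rule ccontr)
      assume "\<not> ?thesis"
      then have e: "P.prob (E N) > 0" by simp
      obtain M where M: "- ln (P.prob (E N)) + (\<Sum>n<N. (real (k n) + 1) * p n) < (\<Sum>n\<le>M. (real (k n) + 1) * p n)"
        using unb by blast
      have MN: "N \<le> M"
      proof (rule ccontr)
        assume "\<not> N \<le> M"
        then have "{..M} \<subseteq> {..<N}" by auto
        then have "(\<Sum>n\<le>M. (real (k n) + 1) * p n) \<le> (\<Sum>n<N. (real (k n) + 1) * p n)"
          by (intro sum_mono2) (use p01 in auto)
        moreover have "- ln (P.prob (E N)) \<ge> 0" using e by simp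
        ultimately show False using M by linarith
      qed
      have split: "(\<Sum>n\<le>M. (real (k n) + 1) * p n) = (\<Sum>n<N. (real (k n) + 1) * p n) + (\<Sum>n\<in>{N..M}. (real (k n) + 1) * p n)"
      proof -
        have "{..M} = {..<N} \<union> {N..M}" using MN by auto
        then show ?thesis by (simp add: sum.union_disjoint ivl_disj_int)
      qed
      have "- ln (P.prob (E N)) < (\<Sum>n\<in>{N..M}. (real (k n) + 1) * p n)" using M split by linarith
      then have "exp (- (\<Sum>n\<in>{N..M}. (real (k n) + 1) * p n)) < exp (ln (P.prob (E N)))" by simp
      then have "exp (- (\<Sum>n\<in>{N..M}. (real (k n) + 1) * p n)) < P.prob (E N)" using e by simp
      then show False using bnd[OF MN] by simp
    qed
    then have "P.prob (E N) = 0" using measure_nonneg[of Q "E N"] by simp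
    then show ?thesis by (simp add: null_sets_def P.emeasure_eq_measure)
  qed
  have "AE x in Q. \<forall>N. x \<notin> E N"
    by (simp add: AE_all_countable AE_not_in Enull)
  moreover have "AE x in Q. \<forall>i n. W i n x \<ge> 0"
    using Wnn by (simp add: AE_all_countable)
  moreover note ae[folded k_def] AE_space
  ultimately have "AE x in Q. False"
  proof eventually_elim
    case (elim x)
    have "(\<lambda>n. a ^ n * (\<Sum>i = 0..k n. W i n x)) \<longlonglongrightarrow> 0" by (rule summable_LIMSEQ_zero[OF elim(3)])
    then have "eventually (\<lambda>n. dist (a ^ n * (\<Sum>i = 0..k n. W i n x)) 0 < 1) sequentially"
      by (rule tendstoD) simp
    then obtain N where N: "\<And>n. n \<ge> N \<Longrightarrow> dist (a ^ n * (\<Sum>i = 0..k n. W i n x)) 0 < 1"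
      by (auto simp: eventually_sequentially)
    from elim(1) have "x \<notin> E N" by simp
    then obtain n i where n: "N \<le> n" "i \<le> k n" "t n \<le> W i n x" using elim(4) unfolding E_def by auto
    have "1 = a ^ n * t n" using at by simp
    also have "\<dots> \<le> a ^ n * W i n x" using n a0 by (intro mult_left_mono) auto
    also have "\<dots> \<le> a ^ n * (\<Sum>i = 0..k n. W i n x)"
      using n elim(2) a0 by (intro mult_left_mono member_le_sum) auto
    finally have "1 \<le> a ^ n * (\<Sum>i = 0..k n. W i n x)" .
    then show False using N[OF n(1)] by (simp add: dist_real_def)
  qed
  then show False by simp
qed


theorem lemma2p2:
  fixes Q :: "'a measure" and V :: "'a \<Rightarrow> real" and W :: "nat \<Rightarrow> nat \<Rightarrow> 'a \<Rightarrow> real"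
    and d :: nat and c a :: real
  assumes "prob_space Q"
    and "d \<ge> 1" and "c > 0" and "0 < a" and "a < 1"
    and "prob_space.indep_vars Q (\<lambda>_. borel)
           (\<lambda>k. case k of None \<Rightarrow> V | Some (i, n) \<Rightarrow> W i n) UNIV"
    and "\<And>i n. distr Q borel (W i n) = distr Q borel V"
    and "V \<in> borel_measurable Q" and "\<And>i n. W i n \<in> borel_measurable Q"
    and "AE x in Q. V x \<ge> 0"
    and "\<And>i n. AE x in Q. W i n x \<ge> 0"
  shows "(\<integral>\<^sup>+ x. ennreal ((log_plus (V x)) ^ d) \<partial>Q) < \<infinity> \<longleftrightarrow>
         (AE x in Q. summable (\<lambda>n. a ^ n *
             (\<Sum>i = 0..nat \<lfloor>c * real n ^ (d - 1)\<rfloor>. W i n x)))"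
proof
  assume "(\<integral>\<^sup>+ x. ennreal ((log_plus (V x)) ^ d) \<partial>Q) < \<infinity>"
  then show "AE x in Q. summable (\<lambda>n. a ^ n *
             (\<Sum>i = 0..nat \<lfloor>c * real n ^ (d - 1)\<rfloor>. W i n x))"
    by (rule dir1[OF assms(1-5,7-9,11)])
next
  assume "AE x in Q. summable (\<lambda>n. a ^ n *
             (\<Sum>i = 0..nat \<lfloor>c * real n ^ (d - 1)\<rfloor>. W i n x))"
  then show "(\<integral>\<^sup>+ x. ennreal ((log_plus (V x)) ^ d) \<partial>Q) < \<infinity>"
    by (rule dir2[OF assms(1-9,11)])
qed

end
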